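(* Let $h_1,\dots,h_{n-k}$ be the generators of a valid rate-$k/n$ quantum convolutional code, where $h_i=(h_{i,1}\,|\,h_{i,2}\,|\cdots|\,h_{i,l_i})$ and each $h_{i,j}$ is an $n$-qubit Pauli operator. Then there exist an integer $m\ge 0$ and $m$-qubit Pauli operators $g_{i,j}$ ($1\le i\le n-k$, $1\le j\le l_i-1$) such that the commutation relations among the input operators of the encoding transformation described in the context are consistent with those among the corresponding output operators; that is, for any two rows $(\mathrm{in}_1\to\mathrm{out}_1)$ and $(\mathrm{in}_2\to\mathrm{out}_2)$ of the transformation, $\mathrm{in}_1\odot\mathrm{in}_2=\mathrm{out}_1\odot\mathrm{out}_2$.
   Context: Pauli operators are considered up to phase. For two Pauli operators $A,B$ on the same qubits, $A\odot B\in\{0,1\}$ equals $1$ if $A$ and $B$ anticommute and $0$ if they commute; for tensor products it is additive modulo $2$ over the factors. A qubit stream is divided into frames of $n$ qubits. A rate-$k/n$ quantum convolutional code is specified by $n-k$ generators $h_1,\dots,h_{n-k}$, where $h_i=(h_{i,1}|\cdots|h_{i,l_i})$ is a finite sequence of $n$-qubit Pauli operators ($l_i\ge1$ is the degree of $h_i$), $h_{i,j}$ acting on the $j$-th frame; the other generators of the code are all shifts of these by integer numbers of frames. The code is valid if all generators and all their frame shifts pairwise commute, i.e. for all $i,i'$ and all integers $t$, $\sum_{r}h_{i,r+t}\odot h_{i',r}=0 \pmod 2$, where $h_{i,j}:=I^{\otimes n}$ for $j\notin\{1,\dots,l_i\}$. Encoding transformation: an encoder acts on $m$ memory qubits, $n-k$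 ancilla qubits and $k$ information qubits, and outputs $n$ physical qubits and $m$ memory qubits. With $s=n-k$, set $g_{i,0}:=g_{i,l_i}:=I^{\otimes m}$, let $A_{i,0}:=Z_i$ (Pauli $Z$ on the $i$-th ancilla qubit, identity on the other ancillas) and $A_{i,j}:=I^{\otimes(n-k)}$ for $j\ge1$. The transformation consists of the rows $g_{i,j}\otimes A_{i,j}\otimes I^{\otimes k}\ \longrightarrow\ h_{i,j+1}\otimes g_{i,j+1}$ for $1\le i\le n-k$, $0\le j\le l_i-1$, where the left side is an operator on (memory, ancilla, information) qubits and the right side an operator on (physical, memory) qubits. *)

theory Defs
  imports Main
begin

datatype pauli = PI | PX | PY | PZ

fun anti :: "pauli \<Rightarrow> pauli \<Rightarrow> nat" where
  "anti a b = (if a \<noteq> PI \<and> b \<noteq> PI \<and> a \<noteq> b then 1 else 0)"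

text \<open>Multi-qubit Pauli operators (tensor products) are lists of single-qubit Paulis;
  the symplectic product is additive mod 2 over the factors.\<close>
definition odot :: "pauli list \<Rightarrow> pauli list \<Rightarrow> nat" where
  "odot A B = sum_list (map2 anti A B) mod 2"

definition ident :: "nat \<Rightarrow> pauli list" where
  "ident n = replicate n PI"

definition hext :: "nat \<Rightarrow> (nat \<Rightarrow> nat) \<Rightarrow> (nat \<Rightarrow> nat \<Rightarrow> pauli list) \<Rightarrow> nat \<Rightarrow> int \<Rightarrow> pauli list" where
  "hext n l h i j = (if 1 \<le> j \<and> j \<le> int (l i) then h i (nat j) else ident n)"

text \<open>The sum over all integers r reduces to the finite
  support r in 1..l i' of the second factor (all other terms commute with identity).\<close>
definition valid_qcc :: "nat \<Rightarrow> nat \<Rightarrow> (nat \<Rightarrow> nat) \<Rightarrow> (nat \<Rightarrow> nat \<Rightarrow> pauli list) \<Rightarrow> bool" where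
  "valid_qcc n k l h \<longleftrightarrow>
     (\<forall>i\<in>{1..n-k}. l i \<ge> 1 \<and> (\<forall>j\<in>{1..l i}. length (h i j) = n)) \<and>
     (\<forall>i\<in>{1..n-k}. \<forall>i'\<in>{1..n-k}. \<forall>t::int.
        (\<Sum>r\<in>{1..int (l i')}. odot (hext n l h i (r + t)) (hext n l h i' r)) mod 2 = 0)"

definition gext :: "nat \<Rightarrow> (nat \<Rightarrow> nat) \<Rightarrow> (nat \<Rightarrow> nat \<Rightarrow> pauli list) \<Rightarrow> nat \<Rightarrow> nat \<Rightarrow> pauli list" where
  "gext m l g i j = (if j = 0 \<or> j = l i then ident m else g i j)"

definition anc :: "nat \<Rightarrow> nat \<Rightarrow> nat \<Rightarrow> pauli list" where
  "anc s i j = (if j = 0 then (ident s)[i - 1 := PZ] else ident s)"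

text \<open>Input (memory, ancilla, information) and output (physical, memory) of row (i,j).\<close>
definition enc_in :: "nat \<Rightarrow> nat \<Rightarrow> nat \<Rightarrow> (nat \<Rightarrow> nat) \<Rightarrow> (nat \<Rightarrow> nat \<Rightarrow> pauli list) \<Rightarrow> nat \<Rightarrow> nat \<Rightarrow> pauli list" where
  "enc_in n k m l g i j = gext m l g i j @ anc (n - k) i j @ ident k"

definition enc_out :: "nat \<Rightarrow> (nat \<Rightarrow> nat) \<Rightarrow> (nat \<Rightarrow> nat \<Rightarrow> pauli list) \<Rightarrow> (nat \<Rightarrow> nat \<Rightarrow> pauli list) \<Rightarrow> nat \<Rightarrow> nat \<Rightarrow> pauli list" where
  "enc_out m l h g i j = h i (j + 1) @ gext m l g i (j + 1)"

definition is_row :: "nat \<Rightarrow> nat \<Rightarrow> (nat \<Rightarrow> nat) \<Rightarrow> nat \<Rightarrow> nat \<Rightarrow> bool" where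
  "is_row n k l i j \<longleftrightarrow> 1 \<le> i \<and> i \<le> n - k \<and> j < l i"

end

theory Submission
  imports Defs
begin

declare anti.simps[simp del]

lemma anti_sym: "anti a b = anti b a" by (auto simp: anti.simps)
lemma anti_self[simp]: "anti a a = 0" by (auto simp: anti.simps)
lemma anti_PI[simp]: "anti PI b = 0" "anti b PI = 0" "anti PZ PZ = 0" by (auto simp: anti.simps)

lemma map2_anti_sym: "map2 anti A B = map2 anti B A"
proof (induction A arbitrary: B)
  case Nil then show ?case by simp
next
  case (Cons a A) then show ?case by (cases B) (auto simp del: anti.simps simp: anti_sym)
qed

lemma odot_sym: "odot A B = odot B A"
  unfolding odot_def using map2_anti_sym by metis

lemma odot_self: "odot A A = 0"
proof -
  have "map2 anti A A = map (\<lambda>_. 0) A" by (induction A) auto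
  then show ?thesis unfolding odot_def by simp
qed

lemma odot_lt2: "odot A B < 2" unfolding odot_def by simp

lemma odot_PIZ: "set A \<subseteq> {PI,PZ} \<Longrightarrow> set B \<subseteq> {PI,PZ} \<Longrightarrow> sum_list (map2 anti A B) = 0"
proof (induction A arbitrary: B)
  case Nil then show ?case by simp
next
  case (Cons a A)
  have z: "x \<in> {PI,PZ} \<Longrightarrow> y \<in> {PI,PZ} \<Longrightarrow> anti x y = 0" for x y by (auto simp: anti.simps)
  show ?case using Cons z by (cases B) (auto simp del: sum_list_eq_0_iff)
qed

lemma odot_ident_l: "odot (ident n) B = 0"
proof -
  have "sum_list (map2 anti (ident n) B) = 0"
  proof (induction n arbitrary: B)
    case 0 then show ?case by (simp add: ident_def)
  next
    case (Suc n) then show ?case by (cases B) (auto simp: ident_def simp del: sum_list_eq_0_iff)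
  qed
  then show ?thesis unfolding odot_def by (simp del: sum_list_eq_0_iff)
qed

lemma odot_ident_r: "odot B (ident n) = 0"
  using odot_ident_l odot_sym by metis

lemma odot_append: "length a = length c \<Longrightarrow> odot (a@b) (c@d) = (odot a c + odot b d) mod 2"
  unfolding odot_def by (simp add: zip_append mod_add_eq)

lemma length_ident[simp]: "length (ident n) = n" by (simp add: ident_def)

lemma anc_set: "set (anc s i j) \<subseteq> {PI,PZ}"
  unfolding anc_def ident_def
  using set_update_subset_insert[of "replicate s PI" "i - 1" PZ] by auto

lemma ident_set: "set (ident k) \<subseteq> {PI,PZ}" unfolding ident_def by auto

lemma odot_anc_ident: "odot (anc s i j @ ident k) (anc s' i' j' @ ident k') = 0"
proof -
  have "set (anc s i j @ ident k) \<subseteq> {PI,PZ}" "set (anc s' i' j' @ ident k') \<subseteq> {PI,PZ}"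
    using anc_set ident_set by auto
  then show ?thesis unfolding odot_def using odot_PIZ by (simp del: sum_list_eq_0_iff)
qed

lemma length_anc[simp]: "length (anc s i j) = s" by (simp add: anc_def)

lemma realize:
  fixes C :: "nat \<Rightarrow> nat \<Rightarrow> bool" and M :: nat
  assumes sym: "\<And>a b. C a b = C b a"
  shows "\<exists>m P. (\<forall>a. length (P a) = m) \<and>
     (\<forall>a<M. \<forall>b<M. odot (P a) (P b) = (if a \<noteq> b \<and> C a b then 1 else 0))"
proof -
  define Q where "Q = filter (\<lambda>(p,q). p < q) (List.product [0..<M] [0..<M])"
  define f where "f a x = (if a = fst x then PX else if a = snd x then (if C (fst x) (snd x) then PZ else PX) else PI)" for a x
  define P where "P a = map (f a) Q" for a
  have dQ: "distinct Q" unfolding Q_def by (simp add: distinct_product)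
  have sQ: "set Q = {(p,q). p < q \<and> q < M}" unfolding Q_def by auto
  have "odot (P a) (P b) = (if a \<noteq> b \<and> C a b then 1 else 0)" if "a < M" "b < M" for a b
  proof -
    have "map2 anti (P a) (P b) = map (\<lambda>x. anti (f a x) (f b x)) Q"
      unfolding P_def by (induction Q) auto
    hence "sum_list (map2 anti (P a) (P b)) = (\<Sum>x\<in>set Q. anti (f a x) (f b x))"
      using dQ by (simp add: sum_list_distinct_conv_sum_set)
    also have "\<dots> = (\<Sum>x\<in>set Q. if x = (min a b, max a b) then (if a \<noteq> b \<and> C a b then 1 else 0) else 0)"
    proof (rule sum.cong)
      fix x assume "x \<in> set Q"
      then obtain p q where x: "x = (p,q)" "p < q" using sQ by auto
      show "anti (f a x) (f b x) = (if x = (min a b, max a b) then (if a \<noteq> b \<and> C a b then 1 else 0) else 0)"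
        using x sym[of a b] by (auto simp: f_def min_def max_def anti.simps)
    qed simp
    also have "\<dots> = (if a \<noteq> b \<and> C a b then 1 else 0)"
    proof (cases "a \<noteq> b \<and> C a b")
      case True
      hence "(min a b, max a b) \<in> set Q" using sQ that by (auto simp: min_def max_def)
      then show ?thesis using True by (simp add: sum.delta[OF finite_set])
    qed simp
    finally show ?thesis unfolding odot_def by simp
  qed
  moreover have "\<forall>a. length (P a) = length Q" unfolding P_def by simp
  ultimately show ?thesis by blast
qed

definition SS :: "nat \<Rightarrow> (nat\<Rightarrow>nat) \<Rightarrow> (nat\<Rightarrow>nat\<Rightarrow>pauli list) \<Rightarrow> nat \<Rightarrow> nat \<Rightarrow> nat \<Rightarrow> nat \<Rightarrow> nat \<Rightarrow> nat" where
  "SS n l h T i j i' j' = (\<Sum>t<T. odot (hext n l h i (int (j+t+1))) (hext n l h i' (int (j'+t+1))))"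

lemma hext_out: "l i < j \<Longrightarrow> hext n l h i (int j) = ident n"
  unfolding hext_def by auto

lemma hext_out_int: "int (l i) < x \<Longrightarrow> hext n l h i x = ident n"
  unfolding hext_def by auto

lemma hext_in: "1 \<le> j \<Longrightarrow> j \<le> l i \<Longrightarrow> hext n l h i (int j) = h i j"
  unfolding hext_def by auto

lemma SS_sym: "SS n l h T i j i' j' = SS n l h T i' j' i j"
  unfolding SS_def using odot_sym by metis

lemma SS_self: "SS n l h T i j i j = 0"
  unfolding SS_def by (simp add: odot_self)

lemma SS_big: "l i \<le> j \<Longrightarrow> SS n l h T i j i' j' = 0"
proof -
  assume a: "l i \<le> j"
  have e: "\<And>t. hext n l h i (int (j+t+1)) = ident n" using a by (intro hext_out) auto
  show ?thesis unfolding SS_def e odot_ident_l by simp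
qed

lemma SS_step:
  assumes "j < l i" "l i \<le> T"
  shows "SS n l h T i j i' j' = odot (hext n l h i (int (j+1))) (hext n l h i' (int (j'+1))) + SS n l h T i (j+1) i' (j'+1)"
proof -
  obtain T' where T: "T = Suc T'" using assms by (cases T) auto
  define f where "f t = odot (hext n l h i (int (j+t+1))) (hext n l h i' (int (j'+t+1)))" for t
  have 1: "SS n l h T i j i' j' = f 0 + (\<Sum>t<T'. f (Suc t))"
    unfolding SS_def f_def[symmetric] T by (rule sum.lessThan_Suc_shift)
  have "SS n l h T i (j+1) i' (j'+1) = (\<Sum>t<Suc T'. f (Suc t))"
    unfolding SS_def f_def T by (simp add: add.commute add.left_commute)
  also have "\<dots> = (\<Sum>t<T'. f (Suc t)) + f (Suc T')" by simp
  also have "f (Suc T') = 0" unfolding f_def using assms T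
    by (simp add: hext_out_int odot_ident_l)
  finally show ?thesis using 1 unfolding f_def by simp
qed

lemma int_interval_img: "{1..int L} = (\<lambda>t. int (t+1)) ` {..<L}"
proof
  show "{1..int L} \<subseteq> (\<lambda>t. int (t+1)) ` {..<L}"
  proof
    fix x assume "x \<in> {1..int L}"
    then show "x \<in> (\<lambda>t. int (t+1)) ` {..<L}"
      by (intro image_eqI[where x="nat (x-1)"]) auto
  qed
qed auto

lemma SS_zero:
  assumes v: "valid_qcc n k l h" and i: "i \<in> {1..n-k}" and i': "i' \<in> {1..n-k}" and T: "l i \<le> T"
  shows "SS n l h T i 0 i' j' mod 2 = 0"
proof -
  have vv: "(\<Sum>r\<in>{1..int (l i)}. odot (hext n l h i' (r + int j')) (hext n l h i r)) mod 2 = 0"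
    using v i i' unfolding valid_qcc_def by blast
  have "(\<Sum>r\<in>{1..int (l i)}. odot (hext n l h i' (r + int j')) (hext n l h i r))
      = (\<Sum>t<l i. odot (hext n l h i' (int (t+1) + int j')) (hext n l h i (int (t+1))))"
    unfolding int_interval_img by (subst sum.reindex) (auto simp: inj_on_def)
  also have "\<dots> = (\<Sum>t<T. odot (hext n l h i' (int (t+1) + int j')) (hext n l h i (int (t+1))))"
    using T by (intro sum.mono_neutral_left) (auto simp: hext_out_int odot_ident_r)
  also have "\<dots> = SS n l h T i 0 i' j'"
    unfolding SS_def by (intro sum.cong refl) (simp add: odot_sym ac_simps)
  finally show ?thesis using vv by simp
qed

lemma idx_lt: "i \<le> N \<Longrightarrow> j < (D::nat) \<Longrightarrow> i*D + j < Suc N * D"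
proof -
  assume a: "i \<le> N" "j < D"
  have "i*D + j < i*D + D" using a by simp
  also have "\<dots> = Suc i * D" by simp
  also have "\<dots> \<le> Suc N * D" using a by (intro mult_le_mono) auto
  finally show ?thesis .
qed

theorem theorem1:
  fixes n k :: nat and l :: "nat \<Rightarrow> nat" and h :: "nat \<Rightarrow> nat \<Rightarrow> pauli list"
  assumes "k \<le> n"
    and "valid_qcc n k l h"
  shows "\<exists>(m::nat) (g :: nat \<Rightarrow> nat \<Rightarrow> pauli list).
           (\<forall>i\<in>{1..n-k}. \<forall>j\<in>{1..l i - 1}. length (g i j) = m) \<and>
           (\<forall>i j i' j'. is_row n k l i j \<longrightarrow> is_row n k l i' j' \<longrightarrow>
              odot (enc_in n k m l g i j) (enc_in n k m l g i' j') =
              odot (enc_out m l h g i j) (enc_out m l h g i' j'))"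
proof -
  note v = assms(2)
  define T where "T = (\<Sum>i\<in>{1..n-k}. l i)"
  have lT: "i \<in> {1..n-k} \<Longrightarrow> l i \<le> T" for i
    unfolding T_def by (rule member_le_sum) auto
  define D where "D = Suc T"
  define S where "S = SS n l h T"
  define C where "C a b = (S (a div D) (a mod D) (b div D) (b mod D) mod 2 = 1)" for a b
  have Csym: "C a b = C b a" for a b unfolding C_def S_def using SS_sym by metis
  obtain m P where Pl: "\<forall>a. length (P a) = m"
    and Po: "\<forall>a<Suc (n-k) * D. \<forall>b<Suc (n-k) * D. odot (P a) (P b) = (if a \<noteq> b \<and> C a b then 1 else 0)"
    using realize[of C "Suc (n-k) * D", OF Csym] by blast
  define g where "g i j = P (i*D + j)" for i j
  have lg: "length (gext m l g i j) = m" for i j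
    unfolding gext_def g_def using Pl by simp
  have G: "odot (gext m l g i j) (gext m l g i' j') = S i j i' j' mod 2"
    if i: "i \<in> {1..n-k}" and i': "i' \<in> {1..n-k}" and j: "j \<le> l i" and j': "j' \<le> l i'" for i j i' j'
  proof -
    consider "j = 0" | "j = l i" | "j' = 0" | "j' = l i'" | "j \<noteq> 0 \<and> j \<noteq> l i \<and> j' \<noteq> 0 \<and> j' \<noteq> l i'" by blast
    then show ?thesis
    proof cases
      case 1 then show ?thesis using SS_zero[OF v i i' lT[OF i]]
        by (simp add: gext_def odot_ident_l S_def)
    next
      case 2 then show ?thesis using SS_big[of l i j] by (simp add: gext_def odot_ident_l S_def)
    next
      case 3 then show ?thesis using SS_zero[OF v i' i lT[OF i'], of j] SS_sym[of n l h T i j i' j']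
        by (simp add: gext_def odot_ident_r S_def)
    next
      case 4 then show ?thesis using SS_big[of l i' j'] SS_sym[of n l h T i j i' j']
        by (simp add: gext_def odot_ident_r S_def)
    next
      case 5
      have jD: "j < D" "j' < D" using j j' lT[OF i] lT[OF i'] unfolding D_def by auto
      have aM: "i*D + j < Suc (n-k) * D" "i'*D + j' < Suc (n-k) * D"
        using idx_lt jD i i' by auto
      have dm: "(i*D+j) div D = i" "(i*D+j) mod D = j" "(i'*D+j') div D = i'" "(i'*D+j') mod D = j'"
        using jD by auto
      have ge: "gext m l g i j = P (i*D+j)" "gext m l g i' j' = P (i'*D+j')"
        using 5 unfolding gext_def g_def by auto
      show ?thesis
      proof (cases "i*D+j = i'*D+j'")
        case True
        hence "i = i'" "j = j'" using dm by metis+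
        then show ?thesis using ge by (simp add: odot_self S_def SS_self)
      next
        case False
        have "S i j i' j' mod 2 < 2" by simp
        moreover have "odot (P (i*D+j)) (P (i'*D+j')) = (if C (i*D+j) (i'*D+j') then 1 else 0)"
          using Po aM False by auto
        moreover have "C (i*D+j) (i'*D+j') = (S i j i' j' mod 2 = 1)" unfolding C_def dm ..
        ultimately show ?thesis using ge by auto
      qed
    qed
  qed
  have main: "odot (enc_in n k m l g i j) (enc_in n k m l g i' j') =
              odot (enc_out m l h g i j) (enc_out m l h g i' j')"
    if r: "is_row n k l i j" "is_row n k l i' j'" for i j i' j'
  proof -
    have i: "i \<in> {1..n-k}" and i': "i' \<in> {1..n-k}" and j: "j < l i" and j': "j' < l i'"
      using r unfolding is_row_def by auto
    have lh: "length (h i (j+1)) = n" "length (h i' (j'+1)) = n"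
      using v i i' j j' unfolding valid_qcc_def by auto
    have "odot (enc_in n k m l g i j) (enc_in n k m l g i' j') = S i j i' j' mod 2"
      unfolding enc_in_def using G[OF i i'] j j' lg
      by (simp add: odot_append odot_anc_ident)
    also have "\<dots> = (odot (h i (j+1)) (h i' (j'+1)) + S i (j+1) i' (j'+1)) mod 2"
    proof -
      have e: "hext n l h i (int (j+1)) = h i (j+1)" "hext n l h i' (int (j'+1)) = h i' (j'+1)"
        using hext_in j j' by (metis Suc_eq_plus1 Suc_leI le_add2)+
      show ?thesis
        using SS_step[where n=n and h=h and i'=i' and j'=j' and l=l and i=i and j=j and T=T, OF j lT[OF i]]
        unfolding e S_def by simp
    qed
    also have "\<dots> = odot (enc_out m l h g i j) (enc_out m l h g i' j')"
      unfolding enc_out_def using G[OF i i', of "j+1" "j'+1"] j j' lh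
      by (simp add: odot_append mod_add_right_eq)
    finally show ?thesis .
  qed
  show ?thesis
    apply (rule exI[of _ m], rule exI[of _ g])
    using main Pl unfolding g_def by blast
qed

end
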